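(* Assume the standing assumptions on $A,\Omega,R,K$ in the context and that there exists $\theta_0\in]-A,A[$ with $\min_{\theta\in]-A,A[}\lambda(\theta,0)=\lambda(\theta_0,0)<0$. For $\varepsilon\in]0,\varepsilon_0[$ let $n_\varepsilon$ be a positive bounded solution of (E) and $\rho_\varepsilon(x)=\int_{-A}^An_\varepsilon(x,\theta)d\theta$. Then $0\le\rho_\varepsilon\le C_R$ for all $\varepsilon<\varepsilon_0$. Moreover, for $p\in[1,+\infty]$ there exists $C>0$ such that $\|\rho_\varepsilon\|_{W^{2,p}(\Omega)}\le C$ for all $\varepsilon$ small enough.
   Context: Standing assumptions: $A>0$; $\Omega=\bigcup_{i=1}^m ]a_i,b_i[\subset\mathbb{R}$ with $a_1<b_1<\dots<a_m<b_m$; $R\in C^1(\overline\Omega\times[-A,A])$ with $\|R\|_{W^{1,\infty}(\Omega\times]-A,A[)}<C_R$ for a constant $C_R$; $K$ is a $C^1$ even function with $K>0$, $0<c_K<K<C_K$, $|K'|<C_K$. $L\phi(x)=\int_\Omega[\phi(x)-\phi(y)]K(x-y)dy$. $\lambda(\theta,\rho)$ is the principal eigenvalue of $\psi\mapsto-\psi''+L\psi-(R(\cdot,\theta)-\rho)\psi$ on $\Omega$ with Neumann boundary conditions. $\mu_\varepsilon$ is the principal eigenvalue of $\xi\mapsto-\partial_{xx}\xi-\varepsilon^2\partial_{\theta\theta}\xi+L\xi-R\xi$ on $\Omega\times]-A,A[$ with Neumann boundary conditions; $\varepsilon_0>0$ is such that $\mu_\varepsilon<\lambda(\theta_0,0)/2$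 for $\varepsilon\in]0,\varepsilon_0[$. Problem (E): $-\varepsilon^2\partial_{\theta\theta}n_\varepsilon-\partial_{xx}n_\varepsilon+Ln_\varepsilon=n_\varepsilon(R-\rho_\varepsilon)$ in $\Omega\times]-A,A[$ ($L$ acting in $x$), $\partial_{\nu_x}n_\varepsilon=0$ on $\partial\Omega\times]-A,A[$, $\partial_{\nu_\theta}n_\varepsilon=0$ on $\Omega\times\{\pm A\}$. *)

theory Defs
  imports "HOL-Analysis.Analysis" "HOL-Probability.Essential_Supremum"
begin

definition Omega :: "(nat \<Rightarrow> real) \<Rightarrow> (nat \<Rightarrow> real) \<Rightarrow> nat \<Rightarrow> real set" where
  "Omega a b m = (\<Union>i<m. {a i<..<b i})"

definition admissible_intervals :: "(nat \<Rightarrow> real) \<Rightarrow> (nat \<Rightarrow> real) \<Rightarrow> nat \<Rightarrow> bool" where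
  "admissible_intervals a b m \<longleftrightarrow> m \<ge> 1 \<and> (\<forall>i<m. a i < b i) \<and> (\<forall>i. Suc i < m \<longrightarrow> b i < a (Suc i))"

text \<open>R is C^1 on closure(Omega) x [-A,A] (continuous partial derivatives up to the boundary of
  each closed rectangle [a_i,b_i] x [-A,A]) and its W^{1,infinity}(Omega x ]-A,A[) norm
  (sup |R| + sup |d_x R| + sup |d_theta R|) is < C_R.\<close>
definition R_hyp :: "(nat \<Rightarrow> real) \<Rightarrow> (nat \<Rightarrow> real) \<Rightarrow> nat \<Rightarrow> real \<Rightarrow> (real \<Rightarrow> real \<Rightarrow> real) \<Rightarrow> real \<Rightarrow> bool" where
  "R_hyp a b m A R C_R \<longleftrightarrow>
    (\<exists>Rx Rt.
      (\<forall>i<m. continuous_on ({a i..b i} \<times> {-A..A}) (\<lambda>(x,t). R x t)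
           \<and> continuous_on ({a i..b i} \<times> {-A..A}) (\<lambda>(x,t). Rx x t)
           \<and> continuous_on ({a i..b i} \<times> {-A..A}) (\<lambda>(x,t). Rt x t)
           \<and> (\<forall>x\<in>{a i..b i}. \<forall>t\<in>{-A..A}.
                ((\<lambda>y. R y t) has_real_derivative Rx x t) (at x within {a i..b i})
              \<and> ((\<lambda>s. R x s) has_real_derivative Rt x t) (at t within {-A..A})))
    \<and> (SUP z\<in>Omega a b m \<times> {-A<..<A}. \<bar>R (fst z) (snd z)\<bar>)
      + (SUP z\<in>Omega a b m \<times> {-A<..<A}. \<bar>Rx (fst z) (snd z)\<bar>)
      + (SUP z\<in>Omega a b m \<times> {-A<..<A}. \<bar>Rt (fst z) (snd z)\<bar>) < C_R)"

definition K_hyp :: "(real \<Rightarrow> real) \<Rightarrow> real \<Rightarrow> real \<Rightarrow> bool" where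
  "K_hyp K c_K C_K \<longleftrightarrow>
    (\<exists>K'. (\<forall>x. (K has_real_derivative K' x) (at x)) \<and> continuous_on UNIV K'
       \<and> (\<forall>x. \<bar>K' x\<bar> < C_K))
    \<and> (\<forall>x. K (- x) = K x) \<and> 0 < c_K \<and> (\<forall>x. c_K < K x \<and> K x < C_K)"

definition Lop :: "real set \<Rightarrow> (real \<Rightarrow> real) \<Rightarrow> (real \<Rightarrow> real) \<Rightarrow> real \<Rightarrow> real" where
  "Lop \<Omega> K \<phi> x = integral \<Omega> (\<lambda>y. (\<phi> x - \<phi> y) * K (x - y))"

definition C2_neumann_1d :: "(nat \<Rightarrow> real) \<Rightarrow> (nat \<Rightarrow> real) \<Rightarrow> nat \<Rightarrow>
    (real \<Rightarrow> real) \<Rightarrow> (real \<Rightarrow> real) \<Rightarrow> (real \<Rightarrow> real) \<Rightarrow> bool" where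
  "C2_neumann_1d a b m \<psi> \<psi>1 \<psi>2 \<longleftrightarrow>
    (\<forall>i<m. (\<forall>x\<in>{a i..b i}. (\<psi> has_real_derivative \<psi>1 x) (at x within {a i..b i})
                         \<and> (\<psi>1 has_real_derivative \<psi>2 x) (at x within {a i..b i}))
          \<and> continuous_on {a i..b i} \<psi>2
          \<and> \<psi>1 (a i) = 0 \<and> \<psi>1 (b i) = 0)"

definition C2_neumann_2d :: "(nat \<Rightarrow> real) \<Rightarrow> (nat \<Rightarrow> real) \<Rightarrow> nat \<Rightarrow> real \<Rightarrow>
    (real \<Rightarrow> real \<Rightarrow> real) \<Rightarrow> (real \<Rightarrow> real \<Rightarrow> real) \<Rightarrow> (real \<Rightarrow> real \<Rightarrow> real) \<Rightarrow>
    (real \<Rightarrow> real \<Rightarrow> real) \<Rightarrow> (real \<Rightarrow> real \<Rightarrow> real) \<Rightarrow> bool" where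
  "C2_neumann_2d a b m A u ux uxx ut utt \<longleftrightarrow>
    (\<forall>i<m.
       (\<forall>f\<in>{u, ux, uxx, ut, utt}. continuous_on ({a i..b i} \<times> {-A..A}) (\<lambda>(x,t). f x t))
     \<and> (\<forall>x\<in>{a i..b i}. \<forall>t\<in>{-A..A}.
          ((\<lambda>y. u y t) has_real_derivative ux x t) (at x within {a i..b i})
        \<and> ((\<lambda>y. ux y t) has_real_derivative uxx x t) (at x within {a i..b i})
        \<and> ((\<lambda>s. u x s) has_real_derivative ut x t) (at t within {-A..A})
        \<and> ((\<lambda>s. ut x s) has_real_derivative utt x t) (at t within {-A..A}))
     \<and> (\<forall>t\<in>{-A<..<A}. ux (a i) t = 0 \<and> ux (b i) t = 0))
    \<and> (\<forall>x\<in>Omega a b m. ut x (-A) = 0 \<and> ut x A = 0)"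

text \<open>lambda(theta, rho): principal eigenvalue (the eigenvalue with a positive eigenfunction) of
  psi \<mapsto> -psi'' + L psi - (R(.,theta) - rho) psi on Omega, Neumann boundary conditions.\<close>
definition lambda_pe :: "(nat \<Rightarrow> real) \<Rightarrow> (nat \<Rightarrow> real) \<Rightarrow> nat \<Rightarrow> (real \<Rightarrow> real) \<Rightarrow>
    (real \<Rightarrow> real \<Rightarrow> real) \<Rightarrow> real \<Rightarrow> (real \<Rightarrow> real) \<Rightarrow> real" where
  "lambda_pe a b m K R \<theta> \<rho> = (THE l. \<exists>\<psi> \<psi>1 \<psi>2.
      C2_neumann_1d a b m \<psi> \<psi>1 \<psi>2 \<and> (\<forall>x\<in>Omega a b m. \<psi> x > 0) \<and>
      (\<forall>x\<in>Omega a b m. - \<psi>2 x + Lop (Omega a b m) K \<psi> x - (R x \<theta> - \<rho> x) * \<psi> x = l * \<psi> x))"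

definition mu_pe :: "(nat \<Rightarrow> real) \<Rightarrow> (nat \<Rightarrow> real) \<Rightarrow> nat \<Rightarrow> real \<Rightarrow> (real \<Rightarrow> real) \<Rightarrow>
    (real \<Rightarrow> real \<Rightarrow> real) \<Rightarrow> real \<Rightarrow> real" where
  "mu_pe a b m A K R \<epsilon> = (THE l. \<exists>\<xi> \<xi>x \<xi>xx \<xi>t \<xi>tt.
      C2_neumann_2d a b m A \<xi> \<xi>x \<xi>xx \<xi>t \<xi>tt \<and>
      (\<forall>x\<in>Omega a b m. \<forall>t\<in>{-A<..<A}. \<xi> x t > 0) \<and>
      (\<forall>x\<in>Omega a b m. \<forall>t\<in>{-A<..<A}.
         - \<xi>xx x t - \<epsilon>\<^sup>2 * \<xi>tt x t + Lop (Omega a b m) K (\<lambda>y. \<xi> y t) x - R x t * \<xi> x t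
           = l * \<xi> x t))"

definition rho_of :: "real \<Rightarrow> (real \<Rightarrow> real \<Rightarrow> real) \<Rightarrow> real \<Rightarrow> real" where
  "rho_of A n x = integral {-A..A} (\<lambda>t. n x t)"

definition pos_bdd_sol_E :: "(nat \<Rightarrow> real) \<Rightarrow> (nat \<Rightarrow> real) \<Rightarrow> nat \<Rightarrow> real \<Rightarrow> (real \<Rightarrow> real) \<Rightarrow>
    (real \<Rightarrow> real \<Rightarrow> real) \<Rightarrow> real \<Rightarrow> (real \<Rightarrow> real \<Rightarrow> real) \<Rightarrow> bool" where
  "pos_bdd_sol_E a b m A K R \<epsilon> n \<longleftrightarrow>
    (\<exists>nx nxx nt ntt. C2_neumann_2d a b m A n nx nxx nt ntt \<and>
      (\<forall>x\<in>Omega a b m. \<forall>t\<in>{-A<..<A}.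
         - \<epsilon>\<^sup>2 * ntt x t - nxx x t + Lop (Omega a b m) K (\<lambda>y. n y t) x
           = n x t * (R x t - rho_of A n x)))
    \<and> (\<forall>x\<in>Omega a b m. \<forall>t\<in>{-A<..<A}. n x t > 0)
    \<and> (\<exists>M. \<forall>x\<in>Omega a b m. \<forall>t\<in>{-A<..<A}. n x t \<le> M)"

definition test_fun :: "real set \<Rightarrow> (real \<Rightarrow> real) \<Rightarrow> bool" where
  "test_fun \<Omega> \<phi> \<longleftrightarrow> (\<forall>k x. ((deriv ^^ k) \<phi>) differentiable (at x))
     \<and> (\<exists>S. compact S \<and> S \<subseteq> \<Omega> \<and> (\<forall>x. x \<notin> S \<longrightarrow> \<phi> x = 0))"

definition weak_deriv :: "real set \<Rightarrow> (real \<Rightarrow> real) \<Rightarrow> (real \<Rightarrow> real) \<Rightarrow> bool" where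
  "weak_deriv \<Omega> f g \<longleftrightarrow>
    (\<forall>S. compact S \<and> S \<subseteq> \<Omega> \<longrightarrow> set_integrable lborel S f \<and> set_integrable lborel S g)
    \<and> (\<forall>\<phi>. test_fun \<Omega> \<phi> \<longrightarrow>
         (LINT x:\<Omega>|lborel. f x * deriv \<phi> x) = - (LINT x:\<Omega>|lborel. g x * \<phi> x))"

definition Lp_norm :: "real set \<Rightarrow> ennreal \<Rightarrow> (real \<Rightarrow> real) \<Rightarrow> ennreal" where
  "Lp_norm \<Omega> p f =
    (if p = \<infinity> then esssup lborel (\<lambda>x. ennreal (indicator \<Omega> x * \<bar>f x\<bar>))
     else (let q = enn2real p;
               I = (\<integral>\<^sup>+ x. ennreal (indicator \<Omega> x * \<bar>f x\<bar> powr q) \<partial>lborel)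
           in if I = \<infinity> then \<infinity> else ennreal (enn2real I powr (1 / q))))"

definition W2p_norm_le :: "real set \<Rightarrow> ennreal \<Rightarrow> (real \<Rightarrow> real) \<Rightarrow> real \<Rightarrow> bool" where
  "W2p_norm_le \<Omega> p f C \<longleftrightarrow>
    (\<exists>g1 g2. (\<lambda>x. indicator \<Omega> x * f x) \<in> borel_measurable lborel
      \<and> (\<lambda>x. indicator \<Omega> x * g1 x) \<in> borel_measurable lborel
      \<and> (\<lambda>x. indicator \<Omega> x * g2 x) \<in> borel_measurable lborel
      \<and> weak_deriv \<Omega> f g1 \<and> weak_deriv \<Omega> g1 g2
      \<and> Lp_norm \<Omega> p f + Lp_norm \<Omega> p g1 + Lp_norm \<Omega> p g2 \<le> ennreal C)"

end

theory Submission
  imports Defs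
begin

lemma adm_less:
  assumes "admissible_intervals a b m" "i < j" "j < m"
  shows "b i < a j"
  using assms(2,3)
proof (induction j)
  case 0 then show ?case by simp
next
  case (Suc k)
  have ab: "\<forall>i<m. a i < b i" "\<forall>i. Suc i < m \<longrightarrow> b i < a (Suc i)"
    using assms(1) unfolding admissible_intervals_def by auto
  show ?case
  proof (cases "i = k")
    case True then show ?thesis using ab Suc by auto
  next
    case False
    then have "b i < a k" using Suc by auto
    also have "a k < b k" using ab Suc by auto
    also have "b k < a (Suc k)" using ab Suc by auto
    finally show ?thesis .
  qed
qed

lemma adm_ab: "admissible_intervals a b m \<Longrightarrow> i < m \<Longrightarrow> a i < b i"
  unfolding admissible_intervals_def by auto

lemma Omega_disj:
  assumes "admissible_intervals a b m" "i < m" "j < m" "i \<noteq> j"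
  shows "{a i<..<b i} \<inter> {a j<..<b j} = {}"
proof (cases "i < j")
  case True then show ?thesis using adm_less[OF assms(1) True assms(3)] by auto
next
  case False then have "j < i" using assms(4) by auto
  then show ?thesis using adm_less[OF assms(1) _ assms(2)] by fastforce
qed

lemma Omega_open: "open (Omega a b m)"
  unfolding Omega_def by auto

lemma Omega_bounded: "bounded (Omega a b m)"
  unfolding Omega_def by (auto intro!: bounded_UN)

lemma endpoints_notin:
  assumes "admissible_intervals a b m" "i < m"
  shows "a i \<notin> Omega a b m" "b i \<notin> Omega a b m"
proof -
  have ab: "\<And>j. j < m \<Longrightarrow> a j < b j" using adm_ab[OF assms(1)] by auto
  show "a i \<notin> Omega a b m"
  proof
    assume "a i \<in> Omega a b m"
    then obtain j where j: "j < m" "a j < a i" "a i < b j" unfolding Omega_def by auto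
    show False
    proof (cases j i rule: linorder_cases)
      case less then show ?thesis using adm_less[OF assms(1) less assms(2)] j by auto
    next
      case equal then show ?thesis using j by auto
    next
      case greater then show ?thesis using adm_less[OF assms(1) greater j(1)] j ab[OF assms(2)] by auto
    qed
  qed
  show "b i \<notin> Omega a b m"
  proof
    assume "b i \<in> Omega a b m"
    then obtain j where j: "j < m" "a j < b i" "b i < b j" unfolding Omega_def by auto
    show False
    proof (cases j i rule: linorder_cases)
      case less then show ?thesis using adm_less[OF assms(1) less assms(2)] j ab[OF j(1)] ab[OF assms(2)] by auto
    next
      case equal then show ?thesis using j by auto
    next
      case greater then show ?thesis using adm_less[OF assms(1) greater j(1)] j by auto
    qed
  qed
qed

lemma Omega_sub: "i < m \<Longrightarrow> {a i<..<b i} \<subseteq> Omega a b m"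
  unfolding Omega_def by auto

lemma Omega_sub2: "Omega a b m \<subseteq> (\<Union>i<m. {a i..b i})"
  unfolding Omega_def by auto

lemma Omega_has_integral:
  fixes h :: "real \<Rightarrow> real"
  assumes "admissible_intervals a b m"
    and "\<And>i. i < m \<Longrightarrow> (h has_integral v i) {a i..b i}"
  shows "(h has_integral (\<Sum>i<m. v i)) (Omega a b m)"
  unfolding Omega_def
proof -
  have 1: "(h has_integral v i) {a i<..<b i}" if "i \<in> {..<m}" for i
    using assms(2)[of i] that has_integral_Icc_iff_Ioo[of h "v i" "a i" "b i"] by simp
  have 2: "pairwise (\<lambda>i i'. negligible ({a i<..<b i} \<inter> {a i'<..<b i'})) {..<m}"
    unfolding pairwise_def using Omega_disj[OF assms(1)] by auto
  show "(h has_integral (\<Sum>i<m. v i)) (\<Union>i<m. {a i<..<b i})"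
    using has_integral_UN[of "{..<m}" h v "\<lambda>i. {a i<..<b i}", OF _ 1 2] by simp
qed

lemma Omega_integral:
  fixes h :: "real \<Rightarrow> real"
  assumes "admissible_intervals a b m"
    and "\<And>i. i < m \<Longrightarrow> h integrable_on {a i..b i}"
  shows "integral (Omega a b m) h = (\<Sum>i<m. integral {a i..b i} h)"
    "h integrable_on Omega a b m"
  using Omega_has_integral[OF assms(1), of h "\<lambda>i. integral {a i..b i} h"] assms(2)
  by (auto intro: integral_unique)

lemma Omega_cont:
  assumes "\<And>i. i < m \<Longrightarrow> continuous_on {a i..b i} f"
  shows "continuous_on (Omega a b m) f"
  unfolding Omega_def
  by (rule continuous_on_open_UN) (auto intro: continuous_on_subset[OF assms])

lemma Omega_meas:
  fixes f :: "real \<Rightarrow> real"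
  assumes "\<And>i. i < m \<Longrightarrow> continuous_on {a i..b i} f"
  shows "(\<lambda>x. indicator (Omega a b m) x * f x) \<in> borel_measurable lborel"
proof -
  have "continuous_on (Omega a b m) f" by (rule Omega_cont) (rule assms)
  then show ?thesis
    using borel_measurable_continuous_on_indicator[of "Omega a b m" f]
      Omega_open[of a b m] by auto
qed

lemma Omega_lebesgue:
  fixes f :: "real \<Rightarrow> real"
  assumes "admissible_intervals a b m"
    and cf: "\<And>i. i < m \<Longrightarrow> continuous_on {a i..b i} f"
  shows "set_integrable lborel (Omega a b m) f"
    "(LINT x:Omega a b m|lborel. f x) = (\<Sum>i<m. integral {a i..b i} f)"
proof -
  have "set_integrable lebesgue (\<Union>i<m. {a i..b i}) f"
    using set_integrable_UN[of "{..<m}" lebesgue "\<lambda>i. {a i..b i}" f]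
    by (auto intro: absolutely_integrable_continuous_real cf)
  then have L: "set_integrable lebesgue (Omega a b m) f"
    by (rule set_integrable_subset)
      (auto simp: Omega_sub2 intro!: lmeasurable_open Omega_bounded Omega_open fmeasurableD)
  have M: "(\<lambda>x. indicator (Omega a b m) x *\<^sub>R f x) \<in> borel_measurable lborel"
    using Omega_meas[OF cf] by simp
  show "set_integrable lborel (Omega a b m) f"
    using L integrable_completion[OF M] unfolding set_integrable_def by simp
  have "(LINT x:Omega a b m|lborel. f x) = (LINT x:Omega a b m|lebesgue. f x)"
    unfolding set_lebesgue_integral_def using integral_completion[OF M] by simp
  also have "\<dots> = integral (Omega a b m) f"
    using set_lebesgue_integral_eq_integral(2)[OF L] .
  also have "\<dots> = (\<Sum>i<m. integral {a i..b i} f)"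
    by (rule Omega_integral(1)[OF assms(1)]) (auto intro: integrable_continuous_interval cf)
  finally show "(LINT x:Omega a b m|lborel. f x) = (\<Sum>i<m. integral {a i..b i} f)" .
qed

lemma Omega_emeasure:
  "emeasure lborel (Omega a b m) \<le> ennreal (\<Sum>i<m. max 0 (b i - a i))"
proof -
  have "emeasure lborel (Omega a b m) \<le> (\<Sum>i<m. emeasure lborel {a i<..<b i})"
    unfolding Omega_def by (rule emeasure_subadditive_finite) auto
  also have "\<dots> = (\<Sum>i<m. ennreal (max 0 (b i - a i)))"
    by (intro sum.cong) (auto simp: max_def ennreal_neg)
  also have "\<dots> = ennreal (\<Sum>i<m. max 0 (b i - a i))" by simp
  finally show ?thesis .
qed



lemma Omega_weak_deriv:
  fixes f g :: "real \<Rightarrow> real"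
  assumes adm: "admissible_intervals a b m"
    and cf: "\<And>i. i < m \<Longrightarrow> continuous_on {a i..b i} f"
    and cg: "\<And>i. i < m \<Longrightarrow> continuous_on {a i..b i} g"
    and df: "\<And>i x. i < m \<Longrightarrow> x \<in> {a i..b i} \<Longrightarrow> (f has_real_derivative g x) (at x within {a i..b i})"
  shows "weak_deriv (Omega a b m) f g"
  unfolding weak_deriv_def
proof (rule conjI; intro allI impI)
  fix S :: "real set" assume S: "compact S \<and> S \<subseteq> Omega a b m"
  then have Sb: "S \<in> sets lborel" by (auto intro: borel_closed compact_imp_closed)
  show "set_integrable lborel S f \<and> set_integrable lborel S g"
    using set_integrable_subset[OF Omega_lebesgue(1)[OF adm cf] Sb]
      set_integrable_subset[OF Omega_lebesgue(1)[OF adm cg] Sb] S by auto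
next
  fix \<phi> assume tf: "test_fun (Omega a b m) \<phi>"
  have d0: "\<phi> differentiable (at x)" for x
    using tf unfolding test_fun_def by (metis funpow_0)
  have d1: "deriv \<phi> differentiable (at x)" for x
    using tf unfolding test_fun_def by (metis funpow_0 funpow_Suc_right o_apply)
  have D: "(\<phi> has_real_derivative deriv \<phi> x) (at x)" for x
    using d0 DERIV_deriv_iff_real_differentiable by blast
  have cphi: "continuous_on U \<phi>" for U
    using d0 by (meson continuous_at_imp_continuous_on differentiable_imp_continuous_within)
  have cdphi: "continuous_on U (deriv \<phi>)" for U
    using d1 by (meson continuous_at_imp_continuous_on differentiable_imp_continuous_within)
  obtain S where S: "compact S" "S \<subseteq> Omega a b m" "\<And>x. x \<notin> S \<Longrightarrow> \<phi> x = 0"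
    using tf unfolding test_fun_def by blast
  have z: "\<phi> (a i) = 0" "\<phi> (b i) = 0" if "i < m" for i
    using S endpoints_notin[OF adm that] by auto
  have "(LINT x:Omega a b m|lborel. f x * deriv \<phi> x) = (\<Sum>i<m. integral {a i..b i} (\<lambda>x. f x * deriv \<phi> x))"
    by (rule Omega_lebesgue(2)[OF adm]) (auto intro!: continuous_intros cf cdphi)
  also have "\<dots> = (\<Sum>i<m. - integral {a i..b i} (\<lambda>x. g x * \<phi> x))"
  proof (rule sum.cong)
    fix i assume "i \<in> {..<m}"
    then have i: "i < m" by simp
    have ab: "a i \<le> b i" using adm_ab[OF adm i] by simp
    have "((\<lambda>x. g x * \<phi> x) has_integral (- integral {a i..b i} (\<lambda>x. f x * deriv \<phi> x))) {a i..b i}"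
    proof (rule integration_by_parts_interior[OF bounded_bilinear_mult ab cf[OF i] cphi])
      show "(f has_vector_derivative g x) (at x)" if "x \<in> {a i<..<b i}" for x
        using df[OF i, of x] that by (simp add: at_within_Icc_at has_real_derivative_iff_has_vector_derivative[symmetric])
      show "(\<phi> has_vector_derivative deriv \<phi> x) (at x)" if "x \<in> {a i<..<b i}" for x
        using D[of x] by (simp add: has_real_derivative_iff_has_vector_derivative)
      have "(\<lambda>x. f x * deriv \<phi> x) integrable_on {a i..b i}"
        by (auto intro!: integrable_continuous_interval continuous_intros cf[OF i] cdphi)
      then show "((\<lambda>x. f x * deriv \<phi> x) has_integral
          (f (b i) * \<phi> (b i) - f (a i) * \<phi> (a i) - - integral {a i..b i} (\<lambda>x. f x * deriv \<phi> x))) {a i..b i}"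
        using z[OF i] by (simp add: has_integral_integral)
    qed
    then show "integral {a i..b i} (\<lambda>x. f x * deriv \<phi> x) = - integral {a i..b i} (\<lambda>x. g x * \<phi> x)"
      by (simp add: integral_unique)
  qed simp
  also have "\<dots> = - (\<Sum>i<m. integral {a i..b i} (\<lambda>x. g x * \<phi> x))"
    by (simp add: sum_negf)
  also have "(\<Sum>i<m. integral {a i..b i} (\<lambda>x. g x * \<phi> x)) = (LINT x:Omega a b m|lborel. g x * \<phi> x)"
    by (rule Omega_lebesgue(2)[OF adm, symmetric]) (auto intro!: continuous_intros cg cphi)
  finally show "(LINT x:Omega a b m|lborel. f x * deriv \<phi> x) = - (LINT x:Omega a b m|lborel. g x * \<phi> x)" .
qed

lemma Lp_bound:
  fixes f :: "real \<Rightarrow> real"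
  assumes meas: "(\<lambda>x. indicator \<Omega> x * f x) \<in> borel_measurable lborel"
    and Ob: "\<Omega> \<in> sets lborel"
    and bd: "\<And>x. x \<in> \<Omega> \<Longrightarrow> \<bar>f x\<bar> \<le> B" and B: "B > 0"
    and em: "emeasure lborel \<Omega> \<le> ennreal D" and D: "D \<ge> 0"
    and p: "p \<ge> 1"
  shows "Lp_norm \<Omega> p f \<le> ennreal (B * max 1 D)"
proof (cases p)
  case top
  have m2: "(\<lambda>x. ennreal (indicator \<Omega> x * \<bar>f x\<bar>)) \<in> borel_measurable lborel"
  proof -
    have "(\<lambda>x. ennreal \<bar>indicator \<Omega> x * f x\<bar>) \<in> borel_measurable lborel"
      using meas by measurable
    moreover have "(\<lambda>x. ennreal \<bar>indicator \<Omega> x * f x\<bar>) = (\<lambda>x. ennreal (indicator \<Omega> x * \<bar>f x\<bar>))"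
      by (auto simp: indicator_def abs_mult)
    ultimately show ?thesis by simp
  qed
  have "esssup lborel (\<lambda>x. ennreal (indicator \<Omega> x * \<bar>f x\<bar>)) \<le> ennreal B"
  proof (rule esssup_I[OF m2], rule AE_I2)
    fix x show "ennreal (indicator \<Omega> x * \<bar>f x\<bar>) \<le> ennreal B"
      using bd[of x] B by (auto simp: indicator_def)
  qed
  also have "ennreal B \<le> ennreal (B * max 1 D)"
    using B by (intro ennreal_leI) (auto simp: max_def)
  finally show ?thesis using top unfolding Lp_norm_def by simp
next
  case (real q)
  then have q: "q \<ge> 1" using p by simp
  have pt: "p \<noteq> \<infinity>" using real by simp
  have eq: "enn2real p = q" using real by simp
  define I where "I = (\<integral>\<^sup>+ x. ennreal (indicator \<Omega> x * \<bar>f x\<bar> powr q) \<partial>lborel)"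
  have "I \<le> (\<integral>\<^sup>+ x. ennreal (B powr q) * indicator \<Omega> x \<partial>lborel)"
    unfolding I_def
  proof (rule nn_integral_mono)
    fix x show "ennreal (indicator \<Omega> x * \<bar>f x\<bar> powr q) \<le> ennreal (B powr q) * indicator \<Omega> x"
      using bd[of x] B q by (auto simp: indicator_def intro!: powr_mono2)
  qed
  also have "\<dots> = ennreal (B powr q) * emeasure lborel \<Omega>"
    by (rule nn_integral_cmult_indicator[OF Ob])
  also have "\<dots> \<le> ennreal (B powr q) * ennreal D"
    by (rule mult_left_mono[OF em]) simp
  also have "\<dots> = ennreal (B powr q * D)"
    using D by (simp add: ennreal_mult'')
  finally have Ile: "I \<le> ennreal (B powr q * D)" .
  then have Inf: "I \<noteq> \<infinity>" by (auto simp: top_unique)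
  have e1: "enn2real I \<le> B powr q * D"
    using Ile D B by (intro enn2real_leI) auto
  have e0: "0 \<le> enn2real I" by simp
  have "enn2real I powr (1 / q) \<le> (B powr q * D) powr (1 / q)"
    using e1 e0 q by (intro powr_mono2) auto
  also have "\<dots> = B * D powr (1 / q)"
    using B D q by (simp add: powr_mult powr_powr)
  also have "\<dots> \<le> B * max 1 D"
  proof (rule mult_left_mono)
    have "D powr (1 / q) \<le> (max 1 D) powr (1 / q)"
      using D q by (intro powr_mono2) auto
    also have "\<dots> \<le> (max 1 D) powr 1"
      using q by (intro powr_mono) auto
    also have "\<dots> = max 1 D" by simp
    finally show "D powr (1 / q) \<le> max 1 D" .
  qed (use B in simp)
  finally have fin: "enn2real I powr (1 / q) \<le> B * max 1 D" .
  show ?thesis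
    unfolding Lp_norm_def using pt eq Inf fin
    by (simp add: Let_def I_def[symmetric] ennreal_leI)
qed



lemma cont_slice_t:
  assumes "continuous_on (U \<times> V) (\<lambda>(x,t). f x t)" "x \<in> U"
  shows "continuous_on V (\<lambda>t. f x t)"
proof -
  have "continuous_on V (\<lambda>t. (\<lambda>(x,t). f x t) (x, t))"
    by (rule continuous_on_compose2[OF assms(1)]) (auto intro!: continuous_intros simp: assms(2))
  then show ?thesis by simp
qed

lemma cont_slice_x:
  assumes "continuous_on (U \<times> V) (\<lambda>(x,t). f x t)" "t \<in> V"
  shows "continuous_on U (\<lambda>x. f x t)"
proof -
  have "continuous_on U (\<lambda>x. (\<lambda>(x,t). f x t) (x, t))"
    by (rule continuous_on_compose2[OF assms(1)]) (auto intro!: continuous_intros simp: assms(2))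
  then show ?thesis by simp
qed

lemma second_deriv_max:
  fixes f f1 f2 :: "real \<Rightarrow> real"
  assumes lh: "lo < hi" and x0: "x0 \<in> {lo..hi}" and mx: "\<And>y. y \<in> {lo..hi} \<Longrightarrow> f y \<le> f x0"
    and d1: "\<And>x. x \<in> {lo..hi} \<Longrightarrow> (f has_real_derivative f1 x) (at x within {lo..hi})"
    and d2: "\<And>x. x \<in> {lo..hi} \<Longrightarrow> (f1 has_real_derivative f2 x) (at x within {lo..hi})"
    and z: "f1 lo = 0" "f1 hi = 0"
  shows "f2 x0 \<le> 0"
proof -
  have f10: "f1 x0 = 0"
  proof (cases "x0 = lo \<or> x0 = hi")
    case True then show ?thesis using z by auto
  next
    case False
    then have i: "lo < x0" "x0 < hi" using x0 by auto
    have D: "DERIV f x0 :> f1 x0"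
      using d1[OF x0] i by (simp add: at_within_Icc_at)
    show ?thesis
    proof (rule DERIV_local_max[OF D, of "min (x0 - lo) (hi - x0)"])
      show "0 < min (x0 - lo) (hi - x0)" using i by simp
      show "\<forall>y. \<bar>x0 - y\<bar> < min (x0 - lo) (hi - x0) \<longrightarrow> f y \<le> f x0"
        using mx by (auto simp: abs_if split: if_splits)
    qed
  qed
  show ?thesis
  proof (rule ccontr)
    assume "\<not> f2 x0 \<le> 0"
    then have pos: "f2 x0 > 0" by simp
    have mvt: "\<exists>z\<in>{u<..<v}. f v - f u = f1 z * (v - u)" if "lo \<le> u" "u < v" "v \<le> hi" for u v
    proof -
      have "\<exists>z\<in>{u<..<v}. f v - f u = (\<lambda>h. h * f1 z) (v - u)"
      proof (rule mvt_simple[OF that(2)])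
        fix x assume "u \<le> x" "x \<le> v"
        then have "x \<in> {lo..hi}" using that by auto
        then have "(f has_real_derivative f1 x) (at x within {u..v})"
          using DERIV_subset[OF d1[of x], of "{u..v}"] that by auto
        then show "(f has_derivative (\<lambda>h. h * f1 x)) (at x within {u..v})"
          by (simp add: has_field_derivative_def mult.commute[of _ "f1 x"])
      qed
      then show ?thesis by (auto simp: mult.commute)
    qed
    show False
    proof (cases "x0 < hi")
      case True
      obtain d where d: "d > 0" "\<And>h. h > 0 \<Longrightarrow> x0 + h \<in> {lo..hi} \<Longrightarrow> h < d \<Longrightarrow> f1 x0 < f1 (x0 + h)"
        using has_real_derivative_pos_inc_right[OF d2[OF x0] pos] by blast
      define h where "h = min (d/2) (hi - x0)"
      have h: "h > 0" "h < d" "x0 + h \<le> hi" using d True by (auto simp: h_def)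
      obtain z where zz: "z \<in> {x0<..<x0+h}" "f (x0+h) - f x0 = f1 z * h"
        using mvt[of x0 "x0+h"] x0 h by auto
      have "f1 z > 0"
        using d(2)[of "z - x0"] zz h x0 f10 by auto
      then have "f (x0 + h) > f x0" using zz h by (simp add: algebra_simps)
      moreover have "f (x0 + h) \<le> f x0" using mx h x0 by auto
      ultimately show False by simp
    next
      case False
      then have xh: "x0 = hi" using x0 by auto
      have d2': "((\<lambda>x. - f1 x) has_real_derivative - f2 x0) (at x0 within {lo..hi})"
        using d2[OF x0] by (rule DERIV_minus)
      obtain d where d: "d > 0" "\<And>h. h > 0 \<Longrightarrow> x0 - h \<in> {lo..hi} \<Longrightarrow> h < d \<Longrightarrow> - f1 x0 < - f1 (x0 - h)"
        using has_real_derivative_neg_dec_left[OF d2'] pos by auto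
      define h where "h = min (d/2) (x0 - lo)"
      have h: "h > 0" "h < d" "lo \<le> x0 - h" using d xh lh by (auto simp: h_def)
      obtain z where zz: "z \<in> {x0-h<..<x0}" "f x0 - f (x0 - h) = f1 z * h"
        using mvt[of "x0 - h" x0] x0 h by auto
      have "f1 z < 0"
        using d(2)[of "x0 - z"] zz h x0 f10 by auto
      then have "f1 z * h < 0" using h(1) by (simp add: mult_neg_pos)
      then have "f (x0 - h) > f x0" using zz by linarith
      moreover have "f (x0 - h) \<le> f x0" using mx h x0 by auto
      ultimately show False by simp
    qed
  qed
qed



locale pde_ctx =
  fixes a b :: "nat \<Rightarrow> real" and m :: nat and A :: real and K :: "real \<Rightarrow> real" and C_K :: real
    and R :: "real \<Rightarrow> real \<Rightarrow> real" and S :: real and eps :: real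
    and n nx nxx nt ntt :: "real \<Rightarrow> real \<Rightarrow> real"
  assumes A: "A > 0" and adm: "admissible_intervals a b m"
    and Kc: "continuous_on UNIV K" and Kpos: "\<And>x. 0 < K x" and KC: "\<And>x. K x < C_K"
    and Rc: "\<And>i. i < m \<Longrightarrow> continuous_on ({a i..b i} \<times> {-A..A}) (\<lambda>(x,t). R x t)"
    and RS: "\<And>i x t. i < m \<Longrightarrow> x \<in> {a i..b i} \<Longrightarrow> t \<in> {-A..A} \<Longrightarrow> \<bar>R x t\<bar> \<le> S"
    and C2: "C2_neumann_2d a b m A n nx nxx nt ntt"
    and eq: "\<forall>x\<in>Omega a b m. \<forall>t\<in>{-A<..<A}.
         - eps\<^sup>2 * ntt x t - nxx x t + Lop (Omega a b m) K (\<lambda>y. n y t) x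
           = n x t * (R x t - rho_of A n x)"
    and pos: "\<forall>x\<in>Omega a b m. \<forall>t\<in>{-A<..<A}. n x t > 0"
begin

abbreviation "rho \<equiv> rho_of A n"
definition "rho1 x = integral {-A..A} (\<lambda>t. nx x t)"
definition "rho2 x = integral {-A..A} (\<lambda>t. nxx x t)"

lemma rho_def': "rho x = integral {-A..A} (\<lambda>t. n x t)"
  by (simp add: rho_of_def)

lemma Kcont[continuous_intros]: "continuous_on U g \<Longrightarrow> continuous_on U (\<lambda>y. K (g y))"
  using continuous_on_compose2[OF Kc] by auto

lemma ab: "i < m \<Longrightarrow> a i < b i" using adm_ab[OF adm] .

lemma m1: "m \<ge> 1" using adm unfolding admissible_intervals_def by simp

lemma cont2:
  assumes "i < m"
  shows "continuous_on ({a i..b i} \<times> {-A..A}) (\<lambda>(x,t). n x t)"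
    "continuous_on ({a i..b i} \<times> {-A..A}) (\<lambda>(x,t). nx x t)"
    "continuous_on ({a i..b i} \<times> {-A..A}) (\<lambda>(x,t). nxx x t)"
    "continuous_on ({a i..b i} \<times> {-A..A}) (\<lambda>(x,t). nt x t)"
    "continuous_on ({a i..b i} \<times> {-A..A}) (\<lambda>(x,t). ntt x t)"
  using C2 assms unfolding C2_neumann_2d_def by auto

lemma derivs:
  assumes "i < m" "x \<in> {a i..b i}" "t \<in> {-A..A}"
  shows "((\<lambda>y. n y t) has_real_derivative nx x t) (at x within {a i..b i})"
    "((\<lambda>y. nx y t) has_real_derivative nxx x t) (at x within {a i..b i})"
    "((\<lambda>s. n x s) has_real_derivative nt x t) (at t within {-A..A})"
    "((\<lambda>s. nt x s) has_real_derivative ntt x t) (at t within {-A..A})"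
  using C2 assms unfolding C2_neumann_2d_def by auto

lemma neum:
  assumes "i < m" "t \<in> {-A<..<A}"
  shows "nx (a i) t = 0" "nx (b i) t = 0"
  using C2 assms unfolding C2_neumann_2d_def by auto

lemma neum_t:
  assumes "x \<in> Omega a b m"
  shows "nt x (-A) = 0" "nt x A = 0"
  using C2 assms unfolding C2_neumann_2d_def by auto

lemma param_cont:
  fixes f f' :: "real \<Rightarrow> real \<Rightarrow> real"
  assumes "i < m" "continuous_on ({a i..b i} \<times> {-A..A}) (\<lambda>(x,t). f x t)"
  shows "continuous_on {a i..b i} (\<lambda>x. integral {-A..A} (\<lambda>t. f x t))"
  using integral_continuous_on_param[of "{a i..b i}" "-A" A f] assms(2) by simp

lemma rho_cont: "i < m \<Longrightarrow> continuous_on {a i..b i} rho"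
  unfolding rho_def' by (rule param_cont) (auto intro: cont2)
lemma rho1_cont: "i < m \<Longrightarrow> continuous_on {a i..b i} rho1"
  unfolding rho1_def by (rule param_cont) (auto intro: cont2)
lemma rho2_cont: "i < m \<Longrightarrow> continuous_on {a i..b i} rho2"
  unfolding rho2_def by (rule param_cont) (auto intro: cont2)

lemma param_deriv:
  fixes f f' :: "real \<Rightarrow> real \<Rightarrow> real"
  assumes "i < m" "x \<in> {a i..b i}"
    and c: "continuous_on ({a i..b i} \<times> {-A..A}) (\<lambda>(x,t). f x t)"
    and c': "continuous_on ({a i..b i} \<times> {-A..A}) (\<lambda>(x,t). f' x t)"
    and d: "\<And>x t. x \<in> {a i..b i} \<Longrightarrow> t \<in> {-A..A} \<Longrightarrow> ((\<lambda>y. f y t) has_real_derivative f' x t) (at x within {a i..b i})"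
  shows "((\<lambda>x. integral {-A..A} (\<lambda>t. f x t)) has_real_derivative integral {-A..A} (\<lambda>t. f' x t)) (at x within {a i..b i})"
proof -
  have "((\<lambda>x. integral (cbox (-A) A) (f x)) has_real_derivative integral (cbox (-A) A) (f' x)) (at x within {a i..b i})"
  proof (rule leibniz_rule_field_derivative)
    show "\<And>x t. x \<in> {a i..b i} \<Longrightarrow> t \<in> cbox (- A) A \<Longrightarrow> ((\<lambda>x. f x t) has_field_derivative f' x t) (at x within {a i..b i})"
      using d by auto
    show "f x integrable_on cbox (- A) A" if "x \<in> {a i..b i}" for x
      using integrable_continuous_interval[OF cont_slice_t[OF c that]] by simp
    show "continuous_on ({a i..b i} \<times> cbox (- A) A) (\<lambda>(x, t). f' x t)" using c' by simp
  qed (use assms in auto)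
  then show ?thesis by simp
qed

lemma rho_deriv: "i < m \<Longrightarrow> x \<in> {a i..b i} \<Longrightarrow> (rho has_real_derivative rho1 x) (at x within {a i..b i})"
  unfolding rho_def' rho1_def using param_deriv[of i x n nx] cont2 derivs by auto

lemma rho1_deriv: "i < m \<Longrightarrow> x \<in> {a i..b i} \<Longrightarrow> (rho1 has_real_derivative rho2 x) (at x within {a i..b i})"
  unfolding rho1_def rho2_def using param_deriv[of i x nx nxx] cont2 derivs by auto

lemma rho1_end: "i < m \<Longrightarrow> rho1 (a i) = 0 \<and> rho1 (b i) = 0"
proof -
  assume i: "i < m"
  have "integral {-A..A} (\<lambda>t. nx (a i) t) = integral {-A..A} (\<lambda>t. 0)"
    by (rule integral_spike[of "{-A,A}"]) (use neum[OF i] in auto)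
  moreover have "integral {-A..A} (\<lambda>t. nx (b i) t) = integral {-A..A} (\<lambda>t. 0)"
    by (rule integral_spike[of "{-A,A}"]) (use neum[OF i] in auto)
  ultimately show ?thesis unfolding rho1_def by simp
qed

lemma n_nonneg:
  assumes i: "i < m" and x: "x \<in> {a i..b i}" and t: "t \<in> {-A..A}"
  shows "0 \<le> n x t"
proof -
  have cl: "closure ({a i<..<b i} \<times> {-A<..<A}) = {a i..b i} \<times> {-A..A}"
    using ab[OF i] A by (simp add: closure_Times)
  have "0 \<le> (\<lambda>(x,t). n x t) (x, t)"
  proof (rule continuous_ge_on_closure[of "{a i<..<b i} \<times> {-A<..<A}"])
    show "continuous_on (closure ({a i<..<b i} \<times> {- A<..<A})) (\<lambda>(x, t). n x t)"
      using cont2(1)[OF i] cl by simp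
    show "(x, t) \<in> closure ({a i<..<b i} \<times> {- A<..<A})" using cl x t by simp
    show "0 \<le> (\<lambda>(x,t). n x t) z" if "z \<in> {a i<..<b i} \<times> {- A<..<A}" for z
      using pos Omega_sub[of i m a b, OF i] that by (auto intro: less_imp_le)
  qed
  then show ?thesis by simp
qed

lemma slice_int: "i < m \<Longrightarrow> x \<in> {a i..b i} \<Longrightarrow> continuous_on {-A..A} (\<lambda>t. n x t)"
  using cont_slice_t[OF cont2(1)] by blast

lemma slice_integrable: "i < m \<Longrightarrow> x \<in> {a i..b i} \<Longrightarrow> (\<lambda>t. n x t) integrable_on {-A..A}"
  using integrable_continuous_interval[OF slice_int] by blast

lemma rho_nonneg: "i < m \<Longrightarrow> x \<in> {a i..b i} \<Longrightarrow> 0 \<le> rho x"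
  unfolding rho_def' by (rule integral_nonneg)
    (auto intro: slice_integrable n_nonneg)

end


lemma cp_conv: "(\<lambda>(x,t). f x t) = (\<lambda>z. f (fst z) (snd z))"
  by (simp add: split_def)

context pde_ctx begin

lemma Lop_sum:
  fixes \<phi> :: "real \<Rightarrow> real"
  assumes "\<And>j. j < m \<Longrightarrow> continuous_on {a j..b j} \<phi>"
  shows "Lop (Omega a b m) K \<phi> x = (\<Sum>j<m. integral {a j..b j} (\<lambda>y. (\<phi> x - \<phi> y) * K (x - y)))"
  unfolding Lop_def
  by (rule Omega_integral(1)[OF adm]) (auto intro!: integrable_continuous_interval continuous_intros assms)

lemma rho_fst: "i < m \<Longrightarrow> continuous_on ({a i..b i} \<times> V) (\<lambda>z. rho (fst z))"
  by (rule continuous_on_compose2[OF rho_cont]) (auto intro: continuous_intros)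
lemma rho_snd: "j < m \<Longrightarrow> continuous_on (U \<times> {a j..b j}) (\<lambda>z. rho (snd z))"
  by (rule continuous_on_compose2[OF rho_cont]) (auto intro: continuous_intros)

lemma Lop_rho_cont: "i < m \<Longrightarrow> continuous_on {a i..b i} (Lop (Omega a b m) K rho)"
proof -
  assume i: "i < m"
  have "continuous_on {a i..b i} (\<lambda>x. \<Sum>j<m. integral {a j..b j} (\<lambda>y. (rho x - rho y) * K (x - y)))"
  proof (rule continuous_on_sum)
    fix j assume "j \<in> {..<m}"
    then have j: "j < m" by simp
    have "continuous_on ({a i..b i} \<times> {a j..b j}) (\<lambda>z. (rho (fst z) - rho (snd z)) * K (fst z - snd z))"
      by (intro continuous_intros rho_fst[OF i] rho_snd[OF j])
    then have "continuous_on ({a i..b i} \<times> cbox (a j) (b j)) (\<lambda>(x,y). (rho x - rho y) * K (x - y))"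
      by (simp add: split_def)
    from integral_continuous_on_param[OF this]
    show "continuous_on {a i..b i} (\<lambda>x. integral {a j..b j} (\<lambda>y. (rho x - rho y) * K (x - y)))"
      by simp
  qed
  then show ?thesis
    by (rule continuous_on_eq) (auto intro!: Lop_sum[symmetric] rho_cont)
qed

lemma nR_cont: "i < m \<Longrightarrow> continuous_on ({a i..b i} \<times> {-A..A}) (\<lambda>(x,t). n x t * R x t)"
proof -
  assume i: "i < m"
  have "continuous_on ({a i..b i} \<times> {-A..A}) (\<lambda>z. n (fst z) (snd z) * R (fst z) (snd z))"
    using continuous_on_mult[OF cont2(1)[OF i] Rc[OF i]] by (simp add: split_def)
  then show ?thesis by (simp add: split_def)
qed

lemma nR_int_cont: "i < m \<Longrightarrow> continuous_on {a i..b i} (\<lambda>x. integral {-A..A} (\<lambda>t. n x t * R x t))"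
  using param_cont[OF _ nR_cont] by blast

lemma Lop_fubini:
  assumes i: "i < m" and x: "x \<in> {a i..b i}"
  shows "((\<lambda>t. Lop (Omega a b m) K (\<lambda>y. n y t) x) has_integral Lop (Omega a b m) K rho x) {-A..A}"
proof -
  define g where "g j t = integral {a j..b j} (\<lambda>y. (n x t - n y t) * K (x - y))" for j t
  have e1: "Lop (Omega a b m) K (\<lambda>y. n y t) x = (\<Sum>j<m. g j t)" if "t \<in> {-A..A}" for t
    unfolding g_def by (rule Lop_sum) (rule cont_slice_x[OF cont2(1) that])
  have sx: "continuous_on {-A..A} (\<lambda>t. n x t)" by (rule slice_int[OF i x])
  have fc: "continuous_on (cbox (a j, -A) (b j, A)) (\<lambda>(y,t). (n x t - n y t) * K (x - y))" if j: "j < m" for j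
  proof -
    have c1: "continuous_on ({a j..b j} \<times> {-A..A}) (\<lambda>z. n x (snd z))"
      by (rule continuous_on_compose2[OF sx]) (auto intro: continuous_intros)
    have c2: "continuous_on ({a j..b j} \<times> {-A..A}) (\<lambda>z. n (fst z) (snd z))"
      using cont2(1)[OF j] by (simp add: split_def)
    have "continuous_on ({a j..b j} \<times> {-A..A}) (\<lambda>z. (n x (snd z) - n (fst z) (snd z)) * K (x - fst z))"
      by (intro continuous_intros c1 c2)
    then show ?thesis by (simp add: split_def cbox_Pair_eq)
  qed
  have gc: "continuous_on {-A..A} (g j)" if j: "j < m" for j
  proof -
    have c1: "continuous_on ({-A..A} \<times> {a j..b j}) (\<lambda>z. n x (fst z))"
      by (rule continuous_on_compose2[OF sx]) (auto intro: continuous_intros)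
    have c2: "continuous_on ({-A..A} \<times> {a j..b j}) (\<lambda>z. (\<lambda>(x,t). n x t) (snd z, fst z))"
      by (rule continuous_on_compose2[OF cont2(1)[OF j]]) (auto intro!: continuous_intros)
    have "continuous_on ({-A..A} \<times> {a j..b j}) (\<lambda>z. (n x (fst z) - n (snd z) (fst z)) * K (x - snd z))"
      using c2 by (intro continuous_intros c1) simp_all
    then have "continuous_on ({-A..A} \<times> cbox (a j) (b j)) (\<lambda>(t,y). (n x t - n y t) * K (x - y))"
      by (simp add: split_def)
    from integral_continuous_on_param[OF this] show ?thesis
      unfolding g_def[abs_def] by simp
  qed
  have swap: "integral {-A..A} (g j) = integral {a j..b j} (\<lambda>y. (rho x - rho y) * K (x - y))"
    if j: "j < m" for j
  proof -
    have "integral {-A..A} (g j) = integral {a j..b j} (\<lambda>y. integral {-A..A} (\<lambda>t. (n x t - n y t) * K (x - y)))"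
      using integral_swap_continuous[OF fc[OF j]] unfolding g_def[abs_def] by simp
    also have "\<dots> = integral {a j..b j} (\<lambda>y. (rho x - rho y) * K (x - y))"
    proof (rule integral_cong)
      fix y assume y: "y \<in> {a j..b j}"
      have "integral {-A..A} (\<lambda>t. (n x t - n y t) * K (x - y))
          = integral {-A..A} (\<lambda>t. n x t - n y t) * K (x - y)"
        by (rule integral_mult_left)
      also have "integral {-A..A} (\<lambda>t. n x t - n y t) = rho x - rho y"
        unfolding rho_def'
        by (rule integral_diff) (auto intro: slice_integrable[OF i x] slice_integrable[OF j y])
      finally show "integral {-A..A} (\<lambda>t. (n x t - n y t) * K (x - y)) = (rho x - rho y) * K (x - y)" .
    qed
    finally show ?thesis .
  qed
  have "((\<lambda>t. \<Sum>j<m. g j t) has_integral (\<Sum>j<m. integral {-A..A} (g j))) {-A..A}"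
    by (rule has_integral_sum) (auto intro!: integrable_integral integrable_continuous_interval gc)
  moreover have "(\<Sum>j<m. integral {-A..A} (g j)) = Lop (Omega a b m) K rho x"
    using swap by (simp add: Lop_sum[OF rho_cont])
  ultimately have "((\<lambda>t. \<Sum>j<m. g j t) has_integral Lop (Omega a b m) K rho x) {-A..A}" by simp
  then show ?thesis
    by (rule has_integral_eq[rotated]) (simp add: e1)
qed

end


context pde_ctx begin

lemma int_id_open:
  assumes i: "i < m" and x: "x \<in> {a i<..<b i}"
  shows "- rho2 x + Lop (Omega a b m) K rho x = integral {-A..A} (\<lambda>t. n x t * R x t) - rho x * rho x"
proof -
  have xO: "x \<in> Omega a b m" using Omega_sub[of i m a b] i x by auto
  have xI: "x \<in> {a i..b i}" using x by auto
  have h1: "((\<lambda>t. ntt x t) has_integral (nt x A - nt x (-A))) {-A..A}"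
    using A derivs(4)[OF i xI]
    by (intro fundamental_theorem_of_calculus)
       (auto simp: has_real_derivative_iff_has_vector_derivative[symmetric])
  then have h1': "((\<lambda>t. ntt x t) has_integral 0) {-A..A}" using neum_t[OF xO] by simp
  have h2: "((\<lambda>t. nxx x t) has_integral rho2 x) {-A..A}"
    unfolding rho2_def
    by (rule integrable_integral, rule integrable_continuous_interval, rule cont_slice_t[OF cont2(3)[OF i] xI])
  have h3: "((\<lambda>t. Lop (Omega a b m) K (\<lambda>y. n y t) x) has_integral Lop (Omega a b m) K rho x) {-A..A}"
    by (rule Lop_fubini[OF i xI])
  have hF: "((\<lambda>t. - eps\<^sup>2 * ntt x t - nxx x t + Lop (Omega a b m) K (\<lambda>y. n y t) x) has_integral
      (- eps\<^sup>2 * 0 - rho2 x + Lop (Omega a b m) K rho x)) {-A..A}"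
    by (intro has_integral_add has_integral_diff has_integral_mult_right h1' h2 h3)
  have hF': "((\<lambda>t. n x t * R x t - n x t * rho x) has_integral
      (- eps\<^sup>2 * 0 - rho2 x + Lop (Omega a b m) K rho x)) {-A..A}"
  proof (rule has_integral_spike_finite[OF _ _ hF, of "{-A, A}"])
    fix t assume "t \<in> {-A..A} - {-A, A}"
    then have "t \<in> {-A<..<A}" by auto
    then show "n x t * R x t - n x t * rho x = - eps\<^sup>2 * ntt x t - nxx x t + Lop (Omega a b m) K (\<lambda>y. n y t) x"
      using eq xO by (simp add: algebra_simps)
  qed simp
  have hG: "((\<lambda>t. n x t * R x t - n x t * rho x) has_integral
      (integral {-A..A} (\<lambda>t. n x t * R x t) - rho x * rho x)) {-A..A}"
  proof (rule has_integral_diff)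
    show "((\<lambda>t. n x t * R x t) has_integral integral {-A..A} (\<lambda>t. n x t * R x t)) {-A..A}"
      by (rule integrable_integral, rule integrable_continuous_interval, rule cont_slice_t[OF nR_cont[OF i] xI])
    have "((\<lambda>t. n x t) has_integral rho x) {-A..A}"
      unfolding rho_def' by (rule integrable_integral, rule slice_integrable[OF i xI])
    then show "((\<lambda>t. n x t * rho x) has_integral rho x * rho x) {-A..A}"
      by (rule has_integral_mult_left)
  qed
  from has_integral_unique[OF hF' hG] show ?thesis by simp
qed

lemma int_id:
  assumes i: "i < m" and x: "x \<in> {a i..b i}"
  shows "- rho2 x + Lop (Omega a b m) K rho x = integral {-A..A} (\<lambda>t. n x t * R x t) - rho x * rho x"
proof -
  have cl: "closure {a i<..<b i} = {a i..b i}" using ab[OF i] by simp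
  define h where "h x = - rho2 x + Lop (Omega a b m) K rho x - integral {-A..A} (\<lambda>t. n x t * R x t) + rho x * rho x" for x
  have hc: "continuous_on (closure {a i<..<b i}) h"
    unfolding cl h_def
    by (intro continuous_intros rho2_cont[OF i] Lop_rho_cont[OF i] nR_int_cont[OF i] rho_cont[OF i])
  have "h x = 0"
    by (rule continuous_constant_on_closure[of "{a i<..<b i}" h 0 x, OF hc])
       (use int_id_open[OF i] cl x in \<open>auto simp: h_def\<close>)
  then show ?thesis unfolding h_def by simp
qed

lemma S_nonneg: "0 \<le> S"
proof -
  have "0 < m" using m1 by simp
  then have "\<bar>R (a 0) 0\<bar> \<le> S" using RS[of 0 "a 0" 0] ab[of 0] A by auto
  then show ?thesis by simp
qed

lemma nR_bound:
  assumes i: "i < m" and x: "x \<in> {a i..b i}"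
  shows "\<bar>integral {-A..A} (\<lambda>t. n x t * R x t)\<bar> \<le> S * rho x"
proof -
  have "norm (integral {-A..A} (\<lambda>t. n x t * R x t)) \<le> integral {-A..A} (\<lambda>t. S * n x t)"
  proof (rule integral_norm_bound_integral)
    show "(\<lambda>t. n x t * R x t) integrable_on {-A..A}"
      by (rule integrable_continuous_interval, rule cont_slice_t[OF nR_cont[OF i] x])
    show "(\<lambda>t. S * n x t) integrable_on {-A..A}"
      using integrable_on_cmult_left[OF slice_integrable[OF i x], of S] by simp
    fix t assume t: "t \<in> {-A..A}"
    have "\<bar>n x t * R x t\<bar> = n x t * \<bar>R x t\<bar>" using n_nonneg[OF i x t] by (simp add: abs_mult)
    also have "\<dots> \<le> n x t * S" using n_nonneg[OF i x t] RS[OF i x t] by (intro mult_left_mono) auto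
    finally show "norm (n x t * R x t) \<le> S * n x t" by (simp add: mult.commute)
  qed
  also have "\<dots> = S * rho x" unfolding rho_def' by simp
  finally show ?thesis by simp
qed

lemma Lop_nonneg_at_max:
  assumes mx: "\<And>j y. j < m \<Longrightarrow> y \<in> {a j..b j} \<Longrightarrow> rho y \<le> rho x0"
  shows "0 \<le> Lop (Omega a b m) K rho x0"
proof -
  have e: "Lop (Omega a b m) K rho x0 = (\<Sum>j<m. integral {a j..b j} (\<lambda>y. (rho x0 - rho y) * K (x0 - y)))"
    by (rule Lop_sum) (rule rho_cont)
  show ?thesis unfolding e
proof (rule sum_nonneg)
  fix j assume "j \<in> {..<m}"
  then have j: "j < m" by simp
  show "0 \<le> integral {a j..b j} (\<lambda>y. (rho x0 - rho y) * K (x0 - y))"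
  proof (rule integral_nonneg)
    show "(\<lambda>y. (rho x0 - rho y) * K (x0 - y)) integrable_on {a j..b j}"
      by (intro integrable_continuous_interval continuous_intros rho_cont[OF j])
    show "0 \<le> (rho x0 - rho y) * K (x0 - y)" if "y \<in> {a j..b j}" for y
      using mx[OF j that] Kpos[of "x0 - y"] by simp
  qed
qed
qed

lemma rho_le_S:
  assumes i: "i < m" and x: "x \<in> {a i..b i}"
  shows "rho x \<le> S"
proof -
  define U where "U = (\<Union>j<m. {a j..b j})"
  have cU: "compact U" unfolding U_def by (intro compact_UN) auto
  have neU: "U \<noteq> {}" unfolding U_def using m1 ab[of 0] by (auto intro!: bexI[of _ 0])
  have contU: "continuous_on U rho"
    unfolding U_def by (rule continuous_on_closed_Union) (auto intro: rho_cont)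
  obtain x0 where x0: "x0 \<in> U" "\<And>y. y \<in> U \<Longrightarrow> rho y \<le> rho x0"
    using continuous_attains_sup[OF cU neU contU] by blast
  obtain k where k: "k < m" "x0 \<in> {a k..b k}" using x0(1) unfolding U_def by auto
  have mx: "\<And>j y. j < m \<Longrightarrow> y \<in> {a j..b j} \<Longrightarrow> rho y \<le> rho x0"
    using x0(2) unfolding U_def by auto
  have r2: "rho2 x0 \<le> 0"
    by (rule second_deriv_max[OF ab[OF k(1)] k(2) mx[OF k(1)] rho_deriv[OF k(1)] rho1_deriv[OF k(1)]])
       (use rho1_end[OF k(1)] in auto)
  have L0: "0 \<le> Lop (Omega a b m) K rho x0" by (rule Lop_nonneg_at_max[OF mx])
  have idk: "rho x0 * rho x0 = integral {-A..A} (\<lambda>t. n x0 t * R x0 t) + rho2 x0 - Lop (Omega a b m) K rho x0"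
    using int_id[OF k] by simp
  have "rho x0 * rho x0 \<le> S * rho x0"
    using idk nR_bound[OF k] r2 L0 by linarith
  then have "rho x0 \<le> S"
    using S_nonneg rho_nonneg[OF k] by (metis mult_le_cancel_right mult_right_mono_neg not_le order_le_less)
  moreover have "rho x \<le> rho x0" using mx[OF i x] .
  ultimately show ?thesis by simp
qed

end


context pde_ctx begin

definition "D = (\<Sum>j<m. (b j - a j))"
definition "B2 = S * C_K * D + 2 * (S * S)"
definition "Bt = S + B2 + B2 * D + 1"

lemma len_le_D: "i < m \<Longrightarrow> b i - a i \<le> D"
  unfolding D_def by (rule member_le_sum) (use ab in \<open>auto intro: less_imp_le\<close>)

lemma D_pos: "D > 0"
  using len_le_D[of 0] ab[of 0] m1 by fastforce

lemma CK_pos: "C_K > 0" using Kpos[of 0] KC[of 0] by simp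

lemma B2_nonneg: "B2 \<ge> 0"
  unfolding B2_def using S_nonneg D_pos CK_pos by simp

lemma Bt_pos: "Bt > 0"
proof -
  have "B2 * D \<ge> 0" using B2_nonneg D_pos by simp
  then show ?thesis unfolding Bt_def using S_nonneg B2_nonneg by linarith
qed

lemma rho_bds: "i < m \<Longrightarrow> x \<in> {a i..b i} \<Longrightarrow> 0 \<le> rho x \<and> rho x \<le> S"
  using rho_nonneg rho_le_S by blast

lemma Lop_bound:
  assumes i: "i < m" and x: "x \<in> {a i..b i}"
  shows "\<bar>Lop (Omega a b m) K rho x\<bar> \<le> S * C_K * D"
proof -
  have e: "Lop (Omega a b m) K rho x = (\<Sum>j<m. integral {a j..b j} (\<lambda>y. (rho x - rho y) * K (x - y)))"
    by (rule Lop_sum) (rule rho_cont)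
  have "\<bar>\<Sum>j<m. integral {a j..b j} (\<lambda>y. (rho x - rho y) * K (x - y))\<bar>
      \<le> (\<Sum>j<m. \<bar>integral {a j..b j} (\<lambda>y. (rho x - rho y) * K (x - y))\<bar>)"
    by (rule sum_abs)
  also have "\<dots> \<le> (\<Sum>j<m. S * C_K * (b j - a j))"
  proof (rule sum_mono)
    fix j assume "j \<in> {..<m}"
    then have j: "j < m" by simp
    have "norm (integral {a j..b j} (\<lambda>y. (rho x - rho y) * K (x - y))) \<le> integral {a j..b j} (\<lambda>y. S * C_K)"
    proof (rule integral_norm_bound_integral)
      show "(\<lambda>y. (rho x - rho y) * K (x - y)) integrable_on {a j..b j}"
        by (intro integrable_continuous_interval continuous_intros rho_cont[OF j])
      show "(\<lambda>y. S * C_K) integrable_on {a j..b j}" by (rule integrable_const_ivl)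
      fix y assume y: "y \<in> {a j..b j}"
      have r: "\<bar>rho x - rho y\<bar> \<le> S" using rho_bds[OF i x] rho_bds[OF j y] by auto
      have k: "\<bar>K (x - y)\<bar> \<le> C_K" using Kpos[of "x - y"] KC[of "x - y"] by simp
      have "\<bar>(rho x - rho y) * K (x - y)\<bar> = \<bar>rho x - rho y\<bar> * \<bar>K (x - y)\<bar>" by (simp add: abs_mult)
      also have "\<dots> \<le> S * C_K" using r k S_nonneg by (intro mult_mono) auto
      finally show "norm ((rho x - rho y) * K (x - y)) \<le> S * C_K" by simp
    qed
    also have "\<dots> = S * C_K * (b j - a j)"
      using ab[OF j] by simp
    finally show "\<bar>integral {a j..b j} (\<lambda>y. (rho x - rho y) * K (x - y))\<bar> \<le> S * C_K * (b j - a j)" by simp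
  qed
  also have "\<dots> = S * C_K * D" unfolding D_def by (simp add: sum_distrib_left)
  finally show ?thesis using e by simp
qed

lemma rho2_bound:
  assumes i: "i < m" and x: "x \<in> {a i..b i}"
  shows "\<bar>rho2 x\<bar> \<le> B2"
proof -
  have e: "rho2 x = Lop (Omega a b m) K rho x - integral {-A..A} (\<lambda>t. n x t * R x t) + rho x * rho x"
    using int_id[OF i x] by simp
  have b1: "\<bar>integral {-A..A} (\<lambda>t. n x t * R x t)\<bar> \<le> S * S"
    using nR_bound[OF i x] rho_bds[OF i x] S_nonneg by (meson mult_left_mono order_trans)
  have b2: "rho x * rho x \<le> S * S" using rho_bds[OF i x] by (intro mult_mono) auto
  have b3: "0 \<le> rho x * rho x" by simp
  show ?thesis using e b1 b2 b3 Lop_bound[OF i x] unfolding B2_def by linarith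
qed

lemma rho1_bound:
  assumes i: "i < m" and x: "x \<in> {a i..b i}"
  shows "\<bar>rho1 x\<bar> \<le> B2 * D"
proof (cases "x = a i")
  case True then show ?thesis using rho1_end[OF i] B2_nonneg D_pos by simp
next
  case False
  then have ax: "a i < x" using x by auto
  have "\<exists>z\<in>{a i<..<x}. rho1 x - rho1 (a i) = (\<lambda>h. h * rho2 z) (x - a i)"
  proof (rule mvt_simple[OF ax])
    fix y assume y: "a i \<le> y" "y \<le> x"
    then have "y \<in> {a i..b i}" using x by auto
    then have "(rho1 has_real_derivative rho2 y) (at y within {a i..x})"
      using DERIV_subset[OF rho1_deriv[OF i], of y "{a i..x}"] x by auto
    then show "(rho1 has_derivative (\<lambda>h. h * rho2 y)) (at y within {a i..x})"
      by (simp add: has_field_derivative_def mult.commute[of _ "rho2 y"])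
  qed
  then obtain z where z: "z \<in> {a i<..<x}" "rho1 x - rho1 (a i) = (x - a i) * rho2 z" by auto
  have zI: "z \<in> {a i..b i}" using z x by auto
  have "\<bar>rho1 x\<bar> = (x - a i) * \<bar>rho2 z\<bar>" using z rho1_end[OF i] ax by (simp add: abs_mult)
  also have "\<dots> \<le> D * B2"
    using rho2_bound[OF i zI] len_le_D[OF i] x ax B2_nonneg by (intro mult_mono) auto
  finally show ?thesis by (simp add: mult.commute)
qed

lemma on_Omega: "x \<in> Omega a b m \<Longrightarrow> \<exists>i<m. x \<in> {a i..b i}"
  using Omega_sub2[of a b m] by blast

lemma W2p:
  assumes p: "p \<ge> 1"
  shows "W2p_norm_le (Omega a b m) p rho (3 * (Bt * max 1 D))"
  unfolding W2p_norm_le_def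
proof (intro exI conjI)
  show "(\<lambda>x. indicator (Omega a b m) x * rho x) \<in> borel_measurable lborel"
    by (rule Omega_meas) (rule rho_cont)
  show m1': "(\<lambda>x. indicator (Omega a b m) x * rho1 x) \<in> borel_measurable lborel"
    by (rule Omega_meas) (rule rho1_cont)
  show m2': "(\<lambda>x. indicator (Omega a b m) x * rho2 x) \<in> borel_measurable lborel"
    by (rule Omega_meas) (rule rho2_cont)
  show "weak_deriv (Omega a b m) rho rho1"
    by (rule Omega_weak_deriv[OF adm rho_cont rho1_cont rho_deriv])
  show "weak_deriv (Omega a b m) rho1 rho2"
    by (rule Omega_weak_deriv[OF adm rho1_cont rho2_cont rho1_deriv])
  have Ob: "Omega a b m \<in> sets lborel" using Omega_open by simp
  have em: "emeasure lborel (Omega a b m) \<le> ennreal D"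
  proof -
    have "(\<Sum>i<m. max 0 (b i - a i)) = D"
      unfolding D_def
    proof (rule sum.cong)
      fix i assume "i \<in> {..<m}"
      then show "max 0 (b i - a i) = b i - a i" using ab[of i] by simp
    qed simp
    then show ?thesis using Omega_emeasure[of a b m] by simp
  qed
  have L0: "Lp_norm (Omega a b m) p rho \<le> ennreal (Bt * max 1 D)"
  proof (rule Lp_bound[OF Omega_meas[OF rho_cont] Ob _ Bt_pos em _ p])
    fix x assume "x \<in> Omega a b m"
    then obtain i where "i < m" "x \<in> {a i..b i}" using on_Omega by blast
    then show "\<bar>rho x\<bar> \<le> Bt" using rho_bds[of i x] B2_nonneg D_pos unfolding Bt_def
      by (smt (verit) mult_nonneg_nonneg)
  qed (auto simp: less_imp_le[OF D_pos])
  have L1: "Lp_norm (Omega a b m) p rho1 \<le> ennreal (Bt * max 1 D)"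
  proof (rule Lp_bound[OF m1' Ob _ Bt_pos em _ p])
    fix x assume "x \<in> Omega a b m"
    then obtain i where "i < m" "x \<in> {a i..b i}" using on_Omega by blast
    then show "\<bar>rho1 x\<bar> \<le> Bt" using rho1_bound[of i x] B2_nonneg D_pos S_nonneg unfolding Bt_def
      by (smt (verit) mult_nonneg_nonneg)
  qed (auto simp: less_imp_le[OF D_pos])
  have L2: "Lp_norm (Omega a b m) p rho2 \<le> ennreal (Bt * max 1 D)"
  proof (rule Lp_bound[OF m2' Ob _ Bt_pos em _ p])
    fix x assume "x \<in> Omega a b m"
    then obtain i where "i < m" "x \<in> {a i..b i}" using on_Omega by blast
    then show "\<bar>rho2 x\<bar> \<le> Bt" using rho2_bound[of i x] B2_nonneg D_pos S_nonneg unfolding Bt_def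
      by (smt (verit) mult_nonneg_nonneg)
  qed (auto simp: less_imp_le[OF D_pos])
  have pos': "0 \<le> Bt * max 1 D" using Bt_pos by simp
  have "Lp_norm (Omega a b m) p rho + Lp_norm (Omega a b m) p rho1 + Lp_norm (Omega a b m) p rho2
      \<le> ennreal (Bt * max 1 D) + ennreal (Bt * max 1 D) + ennreal (Bt * max 1 D)"
    using L0 L1 L2 by (intro add_mono) auto
  also have "\<dots> = ennreal (3 * (Bt * max 1 D))"
  proof -
    have "ennreal (Bt * max 1 D) + ennreal (Bt * max 1 D) + ennreal (Bt * max 1 D)
        = ennreal (Bt * max 1 D + Bt * max 1 D + Bt * max 1 D)"
      using pos' by (metis ennreal_plus add_nonneg_nonneg)
    moreover have "Bt * max 1 D + Bt * max 1 D + Bt * max 1 D = 3 * (Bt * max 1 D)" by simp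
    ultimately show ?thesis by metis
  qed
  finally show "Lp_norm (Omega a b m) p rho + Lp_norm (Omega a b m) p rho1 + Lp_norm (Omega a b m) p rho2
      \<le> ennreal (3 * (Bt * max 1 D))" .
qed

end


lemma rect_bdd:
  fixes f :: "real \<Rightarrow> real \<Rightarrow> real"
  assumes c: "\<And>i. i < m \<Longrightarrow> continuous_on ({a i..b i} \<times> {-A..A}) (\<lambda>(x,t). f x t)"
  shows "bdd_above ((\<lambda>z. \<bar>f (fst z) (snd z)\<bar>) ` (Omega a b m \<times> {-A<..<A}))"
proof -
  define U where "U = (\<Union>i<m. {a i..b i} \<times> {-A..A})"
  have cU: "compact U" unfolding U_def by (intro compact_UN compact_Times) auto
  have "continuous_on U (\<lambda>z. \<bar>f (fst z) (snd z)\<bar>)"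
    unfolding U_def
  proof (rule continuous_on_closed_Union)
    fix i assume "i \<in> {..<m}"
    then have "continuous_on ({a i..b i} \<times> {-A..A}) (\<lambda>z. f (fst z) (snd z))"
      using c[of i] by (simp add: split_def)
    then show "continuous_on ({a i..b i} \<times> {-A..A}) (\<lambda>z. \<bar>f (fst z) (snd z)\<bar>)"
      by (intro continuous_intros)
  qed (auto intro: closed_Times)
  then have "bounded ((\<lambda>z. \<bar>f (fst z) (snd z)\<bar>) ` U)"
    by (intro compact_imp_bounded compact_continuous_image cU)
  then have "bdd_above ((\<lambda>z. \<bar>f (fst z) (snd z)\<bar>) ` U)" by (rule bounded_imp_bdd_above)
  moreover have "Omega a b m \<times> {-A<..<A} \<subseteq> U"
    unfolding U_def using Omega_sub2[of a b m] by fastforce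
  ultimately show ?thesis by (meson bdd_above_mono image_mono)
qed

theorem lemma3:
  fixes a b :: "nat \<Rightarrow> real" and m :: nat and A C_R c_K C_K \<theta>0 \<epsilon>0 :: real
    and R :: "real \<Rightarrow> real \<Rightarrow> real" and K :: "real \<Rightarrow> real"
    and n :: "real \<Rightarrow> real \<Rightarrow> real \<Rightarrow> real"
  assumes "A > 0"
    and "admissible_intervals a b m"
    and "R_hyp a b m A R C_R"
    and "K_hyp K c_K C_K"
    and "\<theta>0 \<in> {-A<..<A}"
    and "\<forall>\<theta>\<in>{-A<..<A}. lambda_pe a b m K R \<theta>0 (\<lambda>_. 0) \<le> lambda_pe a b m K R \<theta> (\<lambda>_. 0)"
    and "lambda_pe a b m K R \<theta>0 (\<lambda>_. 0) < 0"
    and "\<epsilon>0 > 0"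
    and "\<forall>\<epsilon>\<in>{0<..<\<epsilon>0}. mu_pe a b m A K R \<epsilon> < lambda_pe a b m K R \<theta>0 (\<lambda>_. 0) / 2"
    and "\<forall>\<epsilon>\<in>{0<..<\<epsilon>0}. pos_bdd_sol_E a b m A K R \<epsilon> (n \<epsilon>)"
  shows "(\<forall>\<epsilon>\<in>{0<..<\<epsilon>0}. \<forall>x\<in>Omega a b m.
            0 \<le> rho_of A (n \<epsilon>) x \<and> rho_of A (n \<epsilon>) x \<le> C_R)
       \<and> (\<forall>p::ennreal. p \<ge> 1 \<longrightarrow>
            (\<exists>C>0. \<exists>\<epsilon>1>0. \<forall>\<epsilon>. 0 < \<epsilon> \<and> \<epsilon> < \<epsilon>1 \<and> \<epsilon> < \<epsilon>0 \<longrightarrow>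
               W2p_norm_le (Omega a b m) p (rho_of A (n \<epsilon>)) C))"
proof -
  note A = assms(1) and adm = assms(2) and e0 = assms(8) and sol = assms(10)
  obtain K' where K': "\<And>x. (K has_real_derivative K' x) (at x)"
    and Ks: "\<And>x. c_K < K x \<and> K x < C_K" and cK: "0 < c_K"
    using assms(4) unfolding K_hyp_def by blast
  have Kc: "continuous_on UNIV K"
    using K' by (meson DERIV_isCont continuous_at_imp_continuous_on)
  have Kpos: "\<And>x. 0 < K x" using Ks cK by (meson less_trans)
  have KC: "\<And>x. K x < C_K" using Ks by blast
  obtain Rx Rt where
    Rcs: "\<And>i. i < m \<Longrightarrow> continuous_on ({a i..b i} \<times> {-A..A}) (\<lambda>(x,t). R x t)
           \<and> continuous_on ({a i..b i} \<times> {-A..A}) (\<lambda>(x,t). Rx x t)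
           \<and> continuous_on ({a i..b i} \<times> {-A..A}) (\<lambda>(x,t). Rt x t)"
    and Rsum: "(SUP z\<in>Omega a b m \<times> {-A<..<A}. \<bar>R (fst z) (snd z)\<bar>)
      + (SUP z\<in>Omega a b m \<times> {-A<..<A}. \<bar>Rx (fst z) (snd z)\<bar>)
      + (SUP z\<in>Omega a b m \<times> {-A<..<A}. \<bar>Rt (fst z) (snd z)\<bar>) < C_R"
    using assms(3) unfolding R_hyp_def by blast
  define S where "S = (SUP z\<in>Omega a b m \<times> {-A<..<A}. \<bar>R (fst z) (snd z)\<bar>)"
  have m1: "0 < m" using adm unfolding admissible_intervals_def by simp
  have z0: "((a 0 + b 0) / 2, 0) \<in> Omega a b m \<times> {-A<..<A}"
    using Omega_sub[of 0 m a b] m1 adm_ab[OF adm m1] A by auto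
  have bR: "bdd_above ((\<lambda>z. \<bar>R (fst z) (snd z)\<bar>) ` (Omega a b m \<times> {-A<..<A}))"
    by (rule rect_bdd) (use Rcs in blast)
  have bRx: "bdd_above ((\<lambda>z. \<bar>Rx (fst z) (snd z)\<bar>) ` (Omega a b m \<times> {-A<..<A}))"
    by (rule rect_bdd) (use Rcs in blast)
  have bRt: "bdd_above ((\<lambda>z. \<bar>Rt (fst z) (snd z)\<bar>) ` (Omega a b m \<times> {-A<..<A}))"
    by (rule rect_bdd) (use Rcs in blast)
  have "0 \<le> (SUP z\<in>Omega a b m \<times> {-A<..<A}. \<bar>Rx (fst z) (snd z)\<bar>)"
    by (rule cSUP_upper2[OF bRx z0]) simp
  moreover have "0 \<le> (SUP z\<in>Omega a b m \<times> {-A<..<A}. \<bar>Rt (fst z) (snd z)\<bar>)"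
    by (rule cSUP_upper2[OF bRt z0]) simp
  ultimately have SC: "S \<le> C_R" using Rsum unfolding S_def by linarith
  have RS: "\<bar>R x t\<bar> \<le> S" if i: "i < m" and x: "x \<in> {a i..b i}" and t: "t \<in> {-A..A}" for i x t
  proof -
    have cl: "closure ({a i<..<b i} \<times> {-A<..<A}) = {a i..b i} \<times> {-A..A}"
      using adm_ab[OF adm i] A by (simp add: closure_Times)
    have "(\<lambda>z. \<bar>R (fst z) (snd z)\<bar>) (x, t) \<le> S"
    proof (rule continuous_le_on_closure[of "{a i<..<b i} \<times> {-A<..<A}"])
      have "continuous_on ({a i..b i} \<times> {-A..A}) (\<lambda>z. R (fst z) (snd z))"
        using Rcs[OF i] by (simp add: split_def)
      then show "continuous_on (closure ({a i<..<b i} \<times> {- A<..<A})) (\<lambda>z. \<bar>R (fst z) (snd z)\<bar>)"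
        unfolding cl by (intro continuous_intros)
      show "(x, t) \<in> closure ({a i<..<b i} \<times> {- A<..<A})" using cl x t by simp
      fix z assume "z \<in> {a i<..<b i} \<times> {- A<..<A}"
      then have "z \<in> Omega a b m \<times> {-A<..<A}" using Omega_sub[of i m a b] i by auto
      then show "\<bar>R (fst z) (snd z)\<bar> \<le> S" unfolding S_def by (rule cSUP_upper[OF _ bR])
    qed
    then show ?thesis by simp
  qed
  define D' where "D' = (\<Sum>j<m. (b j - a j))"
  define B2' where "B2' = S * C_K * D' + 2 * (S * S)"
  define Bt' where "Bt' = S + B2' + B2' * D' + 1"
  define C where "C = 3 * (Bt' * max 1 D')"
  have inst: "pde_ctx a b m A K C_K R S \<epsilon> (n \<epsilon>) nx nxx nt ntt"
    if "C2_neumann_2d a b m A (n \<epsilon>) nx nxx nt ntt"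
       "\<forall>x\<in>Omega a b m. \<forall>t\<in>{-A<..<A}.
         - \<epsilon>\<^sup>2 * ntt x t - nxx x t + Lop (Omega a b m) K (\<lambda>y. n \<epsilon> y t) x
           = n \<epsilon> x t * (R x t - rho_of A (n \<epsilon>) x)"
       "\<forall>x\<in>Omega a b m. \<forall>t\<in>{-A<..<A}. n \<epsilon> x t > 0"
    for \<epsilon> nx nxx nt ntt
    using that A adm Kc Kpos KC Rcs RS unfolding pde_ctx_def by blast
  have main: "(\<forall>x\<in>Omega a b m. 0 \<le> rho_of A (n \<epsilon>) x \<and> rho_of A (n \<epsilon>) x \<le> S)
      \<and> (\<forall>p::ennreal. p \<ge> 1 \<longrightarrow> W2p_norm_le (Omega a b m) p (rho_of A (n \<epsilon>)) C)"
    if e: "\<epsilon> \<in> {0<..<\<epsilon>0}" for \<epsilon>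
  proof -
    obtain nx nxx nt ntt where C2: "C2_neumann_2d a b m A (n \<epsilon>) nx nxx nt ntt"
      and eq: "\<forall>x\<in>Omega a b m. \<forall>t\<in>{-A<..<A}.
         - \<epsilon>\<^sup>2 * ntt x t - nxx x t + Lop (Omega a b m) K (\<lambda>y. n \<epsilon> y t) x
           = n \<epsilon> x t * (R x t - rho_of A (n \<epsilon>) x)"
      and pos: "\<forall>x\<in>Omega a b m. \<forall>t\<in>{-A<..<A}. n \<epsilon> x t > 0"
      using sol e unfolding pos_bdd_sol_E_def by blast
    interpret P: pde_ctx a b m A K C_K R S \<epsilon> "n \<epsilon>" nx nxx nt ntt
      by (rule inst[OF C2 eq pos])
    have CC: "C = 3 * (P.Bt * max 1 P.D)"
      unfolding C_def Bt'_def B2'_def D'_def P.Bt_def P.B2_def P.D_def ..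
    show ?thesis
    proof (rule conjI; intro allI impI ballI)
      fix x assume "x \<in> Omega a b m"
      then obtain i where "i < m" "x \<in> {a i..b i}" using P.on_Omega by blast
      then show "0 \<le> rho_of A (n \<epsilon>) x \<and> rho_of A (n \<epsilon>) x \<le> S" using P.rho_bds by auto
    next
      fix p :: ennreal assume "p \<ge> 1"
      then show "W2p_norm_le (Omega a b m) p (rho_of A (n \<epsilon>)) C"
        unfolding CC by (rule P.W2p)
    qed
  qed
  have Cpos: "C > 0"
  proof -
    have "S \<ge> 0" using cSUP_upper2[OF bR z0] unfolding S_def by simp
    moreover have "D' \<ge> 0" unfolding D'_def using adm_ab[OF adm] by (intro sum_nonneg) (simp add: less_imp_le)
    moreover have "C_K > 0" using Kpos[of 0] KC[of 0] by simp
    ultimately have "B2' \<ge> 0" unfolding B2'_def by simp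
    then have "Bt' > 0" unfolding Bt'_def using \<open>S \<ge> 0\<close> \<open>D' \<ge> 0\<close>
      by (smt (verit) mult_nonneg_nonneg)
    then show ?thesis unfolding C_def by simp
  qed
  show ?thesis
  proof (rule conjI; intro ballI allI impI)
    fix \<epsilon> x assume "\<epsilon> \<in> {0<..<\<epsilon>0}" "x \<in> Omega a b m"
    then show "0 \<le> rho_of A (n \<epsilon>) x \<and> rho_of A (n \<epsilon>) x \<le> C_R"
      using main SC by fastforce
  next
    fix p :: ennreal assume p: "p \<ge> 1"
    show "\<exists>C>0. \<exists>\<epsilon>1>0. \<forall>\<epsilon>. 0 < \<epsilon> \<and> \<epsilon> < \<epsilon>1 \<and> \<epsilon> < \<epsilon>0 \<longrightarrow>
               W2p_norm_le (Omega a b m) p (rho_of A (n \<epsilon>)) C"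
      using main p Cpos e0 by (intro exI[of _ C] conjI exI[of _ \<epsilon>0]) auto
  qed
qed


end
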